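(* Let $n\geq 2$, let $\Gamma=\langle\mathbb{Z}^n,(0,-I_n)\rangle\subseteq\mathrm{Aff}(\mathbb{R}^n)$ with holonomy group $F=\{I_n,-I_n\}$, and let $\varphi=\xi_{(d,D)}\in\mathrm{Aut}(\Gamma)$ (so that $d\in(\tfrac12\mathbb{Z})^n$ and $D\in\mathrm{GL}_n(\mathbb{Z})$). Then $$R(\varphi)=\left(\frac12\sum_{A\in F}|\det(I_n-AD)|_\infty\right)+O(I_n-D,2d).$$
   Context: $\mathrm{Aff}(\mathbb{R}^n)=\mathbb{R}^n\rtimes\mathrm{GL}_n(\mathbb{R})$ with multiplication $(d_1,D_1)(d_2,D_2)=(d_1+D_1d_2,D_1D_2)$; $\mathbb{Z}^n$ denotes $\{(z,I_n)\mid z\in\mathbb{Z}^n\}$. For $(d,D)\in\mathrm{Aff}(\mathbb{R}^n)$, $\xi_{(d,D)}$ denotes $\gamma\mapsto(d,D)\gamma(d,D)^{-1}$; every automorphism of $\Gamma$ has this form, with $d\in(\frac12\mathbb{Z})^n$. $R(\varphi)$ is the number of classes of the relation $g\sim g'\iff\exists h\in\Gamma: g=hg'\varphi(h)^{-1}$. For an integer $x$, $|x|_\infty=|x|$ if $x\neq0$ and $\infty$ if $x=0$. For $B\in\mathbb{Z}^{n\times n}$, $b\in\mathbb{Z}^n$, $O(B,b)$ is the number of solutions $\bar x\in\mathbb{Z}_2^n$ of $\bar B\bar x=\bar b$ over $\mathbb{Z}_2$, bars denoting reduction mod $2$. *)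

theory Defs
  imports "HOL-Analysis.Analysis"
begin

text \<open>Elements of Aff(R^n) = R^n semidirect GL_n(R), as pairs (d, D).
  The dimension n is the cardinality of the finite index type 'n.\<close>
type_synonym 'n aff = "(real^'n) \<times> (real^'n^'n)"

definition aff_mult :: "'n::finite aff \<Rightarrow> 'n aff \<Rightarrow> 'n aff" where
  "aff_mult g h = (fst g + snd g *v fst h, snd g ** snd h)"

definition aff_inv :: "'n::finite aff \<Rightarrow> 'n aff" where
  "aff_inv g = (- (matrix_inv (snd g) *v fst g), matrix_inv (snd g))"

definition xi :: "'n::finite aff \<Rightarrow> 'n aff \<Rightarrow> 'n aff" where
  "xi g x = aff_mult (aff_mult g x) (aff_inv g)"

inductive_set Gamma :: "'n::finite aff set" where
  transl: "(\<forall>i. z $ i \<in> \<int>) \<Longrightarrow> (z, mat 1) \<in> Gamma"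
| minus: "(0, - mat 1) \<in> Gamma"
| mult: "g \<in> Gamma \<Longrightarrow> h \<in> Gamma \<Longrightarrow> aff_mult g h \<in> Gamma"
| inv: "g \<in> Gamma \<Longrightarrow> aff_inv g \<in> Gamma"

definition twisted_rel :: "('n::finite aff \<Rightarrow> 'n aff) \<Rightarrow> ('n aff \<times> 'n aff) set" where
  "twisted_rel phi = {(g, g'). g \<in> Gamma \<and> g' \<in> Gamma \<and>
      (\<exists>h\<in>Gamma. g = aff_mult (aff_mult h g') (aff_inv (phi h)))}"

definition reidemeister :: "('n::finite aff \<Rightarrow> 'n aff) \<Rightarrow> ereal" where
  "reidemeister phi = (if finite (Gamma // twisted_rel phi)
      then ereal (real (card (Gamma // twisted_rel phi))) else \<infinity>)"

definition abs_inf :: "real \<Rightarrow> ereal" where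
  "abs_inf x = (if x = 0 then \<infinity> else ereal \<bar>x\<bar>)"

text \<open>O(B,b): number of solutions in Z_2^n of  B x = b  mod 2; Z_2^n is represented
  by 0/1 integer vectors.\<close>
definition O_count :: "int^'n^'n \<Rightarrow> int^'n::finite \<Rightarrow> nat" where
  "O_count B b = card {x :: int^'n. (\<forall>i. x $ i \<in> {0, 1}) \<and>
      (\<forall>i. (B *v x) $ i mod 2 = b $ i mod 2)}"

end

theory Submission
  imports Defs
begin

definition mequiv :: "int^'n::finite^'n \<Rightarrow> int^'n^'n \<Rightarrow> bool" where
  "mequiv M N \<longleftrightarrow> (\<exists>P Q. invertible P \<and> invertible Q \<and> N = P ** M ** Q)"

lemma invertible_mult_gen:
  fixes A B :: "'a::semiring_1^'n::finite^'n"
  assumes "invertible A" "invertible B" shows "invertible (A ** B)"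
proof -
  obtain A' where AA': "A ** A' = mat 1" and A'A: "A' ** A = mat 1" 
    using assms unfolding invertible_def by blast
  obtain B' where BB': "B ** B' = mat 1" and B'B: "B' ** B = mat 1" 
    using assms unfolding invertible_def by blast
  have "A ** B ** (B' ** A') = mat 1"
    by (metis AA' BB' matrix_mul_assoc matrix_mul_rid)
  moreover have "B' ** A' ** (A ** B) = mat 1"
    by (metis A'A B'B matrix_mul_assoc matrix_mul_rid)
  ultimately show ?thesis
    using invertible_def by blast
qed

lemma invertible_I: "invertible (mat 1 :: 'a::semiring_1^'n::finite^'n)"
  unfolding invertible_def by (rule exI[of _ "mat 1"]) simp

lemma invertible_transpose_gen:
  fixes A :: "'a::comm_semiring_1^'n::finite^'n"
  assumes "invertible A" shows "invertible (transpose A)"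
proof -
  obtain A' where AA': "A ** A' = mat 1" and A'A: "A' ** A = mat 1" 
    using assms unfolding invertible_def by blast
  have "transpose A ** transpose A' = mat 1" "transpose A' ** transpose A = mat 1"
    by (metis A'A AA' matrix_transpose_mul transpose_mat)+
  thus ?thesis unfolding invertible_def by blast
qed

lemma mequiv_refl: "mequiv M M"
  unfolding mequiv_def by (rule exI[of _ "mat 1"], rule exI[of _ "mat 1"]) (simp add: invertible_I)

lemma mequiv_trans: "mequiv M N \<Longrightarrow> mequiv N K \<Longrightarrow> mequiv M K"
  unfolding mequiv_def
proof (elim exE conjE)
  fix P Q P' Q'
  assume a: "invertible P" "invertible Q" "N = P ** M ** Q" "invertible P'" "invertible Q'" "K = P' ** N ** Q'"
  show "\<exists>P Q. invertible P \<and> invertible Q \<and> K = P ** M ** Q"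
    apply (rule exI[of _ "P' ** P"], rule exI[of _ "Q ** Q'"])
    using a by (simp add: invertible_mult_gen matrix_mul_assoc)
qed

lemma mequiv_right: "invertible Q \<Longrightarrow> mequiv N (N ** Q)"
  unfolding mequiv_def by (rule exI[of _ "mat 1"], rule exI[of _ Q]) (simp add: invertible_I)

lemma mequiv_transpose: "mequiv M N \<Longrightarrow> mequiv (transpose M) (transpose N)"
  unfolding mequiv_def
proof (elim exE conjE)
  fix P Q assume a: "invertible P" "invertible Q" "N = P ** M ** Q"
  show "\<exists>P Q. invertible P \<and> invertible Q \<and> transpose N = P ** transpose M ** Q"
    apply (rule exI[of _ "transpose Q"], rule exI[of _ "transpose P"])
    using a by (simp add: invertible_transpose_gen matrix_transpose_mul matrix_mul_assoc)
qed

definition addm :: "'n::finite \<Rightarrow> 'n \<Rightarrow> int \<Rightarrow> int^'n^'n" where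
  "addm i j t = (\<chi> a b. if a = b then 1 else if a = i \<and> b = j then t else 0)"

lemma mult_addm:
  assumes "i \<noteq> j"
  shows "(N ** addm i j t) $ a $ b = N$a$b + (if b = j then t * N$a$i else 0)"
proof -
  have "(N ** addm i j t) $ a $ b = (\<Sum>c\<in>UNIV. N$a$c * (if c = b then 1 else if c = i \<and> b = j then t else 0))"
    by (simp add: matrix_matrix_mult_def addm_def)
  also have "\<dots> = (\<Sum>c\<in>UNIV. (if c = b then N$a$c else 0) + (if c = i then (if b = j then t * N$a$i else 0) else 0))"
    by (rule sum.cong) (use assms in auto)
  also have "\<dots> = N$a$b + (if b = j then t * N$a$i else 0)"
    by (simp add: sum.distrib)
  finally show ?thesis .
qed

lemma invertible_addm: assumes "i \<noteq> j" shows "invertible (addm i j t)"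
proof -
  have "addm i j t ** addm i j (-t) = mat 1" "addm i j (-t) ** addm i j t = mat 1"
    using assms by (simp_all add: vec_eq_iff mult_addm) (auto simp: mat_def addm_def)
  thus ?thesis unfolding invertible_def by blast
qed

definition sw :: "'n \<Rightarrow> 'n \<Rightarrow> 'n \<Rightarrow> 'n" where
  "sw i j b = (if b = i then j else if b = j then i else b)"

definition swm :: "'n::finite \<Rightarrow> 'n \<Rightarrow> int^'n^'n" where
  "swm i j = (\<chi> c b. if c = sw i j b then 1 else 0)"

lemma mult_swm: "(N ** swm i j) $ a $ b = N$a$(sw i j b)"
proof -
  have "(N ** swm i j) $ a $ b = (\<Sum>c\<in>UNIV. if c = sw i j b then N$a$c else 0)"
    by (simp add: matrix_matrix_mult_def swm_def if_distrib cong: if_cong)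
  thus ?thesis by simp
qed

lemma sw_sw[simp]: "sw i j (sw i j b) = b" by (auto simp: sw_def)

lemma invertible_swm: "invertible (swm i j)"
proof -
  have "swm i j ** swm i j = mat 1"
    by (simp add: vec_eq_iff mult_swm) (auto simp: mat_def swm_def)
  thus ?thesis unfolding invertible_def by blast
qed

definition clean :: "'n::finite \<Rightarrow> int^'n^'n \<Rightarrow> bool" where
  "clean i N \<longleftrightarrow> (\<forall>j. j \<noteq> i \<longrightarrow> N$i$j = 0 \<and> N$j$i = 0)"

definition cnt :: "'n::finite \<Rightarrow> int^'n^'n \<Rightarrow> nat" where
  "cnt k N = card {j. j \<noteq> k \<and> N$k$j \<noteq> 0} + card {j. j \<noteq> k \<and> N$j$k \<noteq> 0}"

lemma clean_transpose: "clean i (transpose N) = clean i N"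
  unfolding clean_def transpose_def by auto

lemma cnt_transpose: "cnt k (transpose N) = cnt k N"
  unfolding cnt_def transpose_def by auto

lemma cnt_le: "cnt k (N::int^'n::finite^'n) \<le> 2 * CARD('n)"
proof -
  have "card {j. j \<noteq> k \<and> N$k$j \<noteq> 0} \<le> CARD('n)" "card {j. j \<noteq> k \<and> N$j$k \<noteq> 0} \<le> CARD('n)"
    by (simp_all add: card_mono)
  thus ?thesis unfolding cnt_def by simp
qed

lemma col_step:
  fixes N :: "int^'n::finite^'n"
  assumes S: "\<forall>i\<in>S. clean i N" and k: "k \<notin> S" and a: "N$k$k \<noteq> 0"
    and j: "j \<noteq> k" "N$k$j \<noteq> 0"
  shows "\<exists>N'. mequiv N N' \<and> (\<forall>i\<in>S. clean i N') \<and> N'$k$k \<noteq> 0 \<and>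
     (nat \<bar>N'$k$k\<bar> < nat \<bar>N$k$k\<bar> \<or> (N'$k$k = N$k$k \<and> cnt k N' < cnt k N))"
proof -
  define a where "a = N$k$k"
  define q where "q = N$k$j div a"
  define N1 where "N1 = N ** addm k j (-q)"
  have jS: "j \<notin> S" using S j unfolding clean_def by auto
  have N1: "N1$x$y = N$x$y + (if y = j then -q * N$x$k else 0)" for x y
    unfolding N1_def using j by (simp add: mult_addm)
  have N1kj: "N1$k$j = N$k$j mod a"
  proof -
    have "N1$k$j = N$k$j - q * a" by (simp add: N1 a_def algebra_simps)
    also have "\<dots> = N$k$j mod a" by (simp add: q_def minus_div_mult_eq_mod)
    finally show ?thesis .
  qed
  have eq1: "mequiv N N1" unfolding N1_def by (rule mequiv_right, rule invertible_addm) (use j in auto)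
  have S1: "\<forall>i\<in>S. clean i N1"
  proof
    fix i assume i: "i \<in> S"
    have "i \<noteq> k" "i \<noteq> j" using i k jS by auto
    thus "clean i N1" using S i unfolding clean_def N1 by auto
  qed
  have colk: "N1$x$k = N$x$k" for x using N1[of x k] j by simp
  have rowk: "y \<noteq> j \<Longrightarrow> N1$k$y = N$k$y" for y using N1[of k y] by simp
  show ?thesis
  proof (cases "N$k$j mod a = 0")
    case True
    have "{y. y \<noteq> k \<and> N1$k$y \<noteq> 0} \<subset> {y. y \<noteq> k \<and> N$k$y \<noteq> 0}"
      apply (rule psubsetI)
      subgoal using rowk N1kj True by (smt (verit) mem_Collect_eq subsetI)
      subgoal using N1kj True j by auto
      done
    hence "card {y. y \<noteq> k \<and> N1$k$y \<noteq> 0} < card {y. y \<noteq> k \<and> N$k$y \<noteq> 0}"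
      by (simp add: psubset_card_mono)
    hence "cnt k N1 < cnt k N" unfolding cnt_def colk by simp
    thus ?thesis using eq1 S1 colk[of k] a by (intro exI[of _ N1]) simp
  next
    case False
    define N2 where "N2 = N1 ** swm j k"
    have N2: "N2$x$y = N1$x$(sw j k y)" for x y unfolding N2_def by (simp add: mult_swm)
    have eq2: "mequiv N N2" unfolding N2_def by (rule mequiv_trans[OF eq1 mequiv_right[OF invertible_swm]])
    have S2: "\<forall>i\<in>S. clean i N2"
    proof
      fix i assume i: "i \<in> S"
      have "i \<noteq> k" "i \<noteq> j" using i k jS by auto
      hence si: "sw j k y = i \<longleftrightarrow> y = i" for y by (auto simp: sw_def)
      have si2: "sw j k i = i" using si by (metis sw_sw)
      show "clean i N2" using S1 i si unfolding clean_def N2 si2 by simp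
    qed
    have kk: "N2$k$k = N$k$j mod a" using N2[of k k] N1kj j(1) by (simp add: sw_def)
    have "\<bar>N$k$j mod a\<bar> < \<bar>a\<bar>" using a unfolding a_def by (simp add: abs_mod_less)
    hence "nat \<bar>N2$k$k\<bar> < nat \<bar>N$k$k\<bar>" using kk a_def by simp
    thus ?thesis using eq2 S2 kk False by auto
  qed
qed

lemma row_step:
  fixes N :: "int^'n::finite^'n"
  assumes S: "\<forall>i\<in>S. clean i N" and k: "k \<notin> S" and a: "N$k$k \<noteq> 0"
    and j: "j \<noteq> k" "N$j$k \<noteq> 0"
  shows "\<exists>N'. mequiv N N' \<and> (\<forall>i\<in>S. clean i N') \<and> N'$k$k \<noteq> 0 \<and>
     (nat \<bar>N'$k$k\<bar> < nat \<bar>N$k$k\<bar> \<or> (N'$k$k = N$k$k \<and> cnt k N' < cnt k N))"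
proof -
  have "\<exists>N'. mequiv (transpose N) N' \<and> (\<forall>i\<in>S. clean i N') \<and> N'$k$k \<noteq> 0 \<and>
     (nat \<bar>N'$k$k\<bar> < nat \<bar>(transpose N)$k$k\<bar> \<or> (N'$k$k = (transpose N)$k$k \<and> cnt k N' < cnt k (transpose N)))"
  proof (rule col_step[where j=j])
    show "\<forall>i\<in>S. clean i (transpose N)" using S by (simp add: clean_transpose)
  qed (use k a j in \<open>simp_all add: transpose_def\<close>)
  then obtain N' where N': "mequiv (transpose N) N'" "\<forall>i\<in>S. clean i N'" "N'$k$k \<noteq> 0"
     "(nat \<bar>N'$k$k\<bar> < nat \<bar>(transpose N)$k$k\<bar> \<or> (N'$k$k = (transpose N)$k$k \<and> cnt k N' < cnt k (transpose N)))"
    by blast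
  have "mequiv N (transpose N')" using mequiv_transpose[OF N'(1)] by simp
  moreover have "(transpose N')$k$k = N'$k$k" "(transpose N)$k$k = N$k$k" by (simp_all add: transpose_def)
  ultimately show ?thesis using N' by (intro exI[of _ "transpose N'"]) (simp add: clean_transpose cnt_transpose)
qed

lemma clean_nonzero:
  fixes N :: "int^'n::finite^'n"
  assumes "\<forall>i\<in>S. clean i N" "k \<notin> S" "N$k$k \<noteq> 0"
  shows "\<exists>N'. mequiv N N' \<and> (\<forall>i\<in>insert k S. clean i N')"
  using assms
proof (induction "nat \<bar>N$k$k\<bar> * (2 * CARD('n) + 1) + cnt k N" arbitrary: N rule: less_induct)
  case less
  show ?case
  proof (cases "cnt k N = 0")
    case True
    hence "clean k N" unfolding cnt_def clean_def by auto
    thus ?thesis using less.prems mequiv_refl by blast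
  next
    case False
    then obtain j where j: "j \<noteq> k" "N$k$j \<noteq> 0 \<or> N$j$k \<noteq> 0"
    proof -
      have "{j. j \<noteq> k \<and> N$k$j \<noteq> 0} \<noteq> {} \<or> {j. j \<noteq> k \<and> N$j$k \<noteq> 0} \<noteq> {}"
        using False unfolding cnt_def by auto
      thus ?thesis using that by blast
    qed
    have "\<exists>N'. mequiv N N' \<and> (\<forall>i\<in>S. clean i N') \<and> N'$k$k \<noteq> 0 \<and>
     (nat \<bar>N'$k$k\<bar> < nat \<bar>N$k$k\<bar> \<or> (N'$k$k = N$k$k \<and> cnt k N' < cnt k N))"
      using j col_step[OF less.prems, of j] row_step[OF less.prems, of j] by blast
    then obtain N' where N': "mequiv N N'" "\<forall>i\<in>S. clean i N'" "N'$k$k \<noteq> 0"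
      "nat \<bar>N'$k$k\<bar> < nat \<bar>N$k$k\<bar> \<or> (N'$k$k = N$k$k \<and> cnt k N' < cnt k N)" by blast
    have lt: "nat \<bar>N'$k$k\<bar> * (2 * CARD('n) + 1) + cnt k N' < nat \<bar>N$k$k\<bar> * (2 * CARD('n) + 1) + cnt k N"
    proof (cases "nat \<bar>N'$k$k\<bar> < nat \<bar>N$k$k\<bar>")
      case True
      have "nat \<bar>N'$k$k\<bar> * (2 * CARD('n) + 1) + cnt k N' \<le> nat \<bar>N'$k$k\<bar> * (2 * CARD('n) + 1) + 2 * CARD('n)"
        using cnt_le[of k N'] by simp
      also have "\<dots> < (nat \<bar>N'$k$k\<bar> + 1) * (2 * CARD('n) + 1)" by simp
      also have "\<dots> \<le> nat \<bar>N$k$k\<bar> * (2 * CARD('n) + 1)"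
        using True by (intro mult_right_mono) auto
      finally show ?thesis by simp
    next
      case False thus ?thesis using N'(4) by auto
    qed
    obtain N'' where "mequiv N' N''" "\<forall>i\<in>insert k S. clean i N''"
      using less.hyps[OF lt N'(2) less.prems(2) N'(3)] by blast
    thus ?thesis using mequiv_trans[OF N'(1)] by blast
  qed
qed

lemma clean_any:
  fixes N :: "int^'n::finite^'n"
  assumes S: "\<forall>i\<in>S. clean i N" and k: "k \<notin> S"
  shows "\<exists>N'. mequiv N N' \<and> (\<forall>i\<in>insert k S. clean i N')"
proof (cases "N$k$k \<noteq> 0")
  case True thus ?thesis using clean_nonzero[OF S k] by blast
next
  case False
  show ?thesis
  proof (cases "clean k N")
    case True thus ?thesis using S mequiv_refl by blast
  next
    case nc: False
    then obtain j where j: "j \<noteq> k" "N$k$j \<noteq> 0 \<or> N$j$k \<noteq> 0" unfolding clean_def by blast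
    have jS: "j \<notin> S" using S j unfolding clean_def by auto
    have swap_ok: "\<forall>i\<in>S. clean i (M ** swm j k)" if "\<forall>i\<in>S. clean i M" for M :: "int^'n^'n"
    proof
      fix i assume i: "i \<in> S"
      have "i \<noteq> k" "i \<noteq> j" using i k jS by auto
      hence si: "sw j k y = i \<longleftrightarrow> y = i" for y by (auto simp: sw_def)
      have "sw j k i = i" using si by (metis sw_sw)
      thus "clean i (M ** swm j k)" using that i si unfolding clean_def mult_swm by metis
    qed
    show ?thesis
    proof (cases "N$k$j \<noteq> 0")
      case True
      define N1 where "N1 = N ** swm j k"
      have "N1$k$k \<noteq> 0" unfolding N1_def mult_swm using True j(1) by (simp add: sw_def)
      then obtain N' where "mequiv N1 N'" "\<forall>i\<in>insert k S. clean i N'"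
        using clean_nonzero[OF swap_ok[OF S] k] unfolding N1_def by blast
      thus ?thesis using mequiv_trans[OF mequiv_right[OF invertible_swm]] unfolding N1_def by blast
    next
      case False
      hence jk: "N$j$k \<noteq> 0" using j by auto
      define N1 where "N1 = transpose N ** swm j k"
      have St: "\<forall>i\<in>S. clean i (transpose N)" using S by (simp add: clean_transpose)
      have "N1$k$k \<noteq> 0" unfolding N1_def mult_swm using jk j(1) by (simp add: sw_def transpose_def)
      then obtain N' where N': "mequiv N1 N'" "\<forall>i\<in>insert k S. clean i N'"
        using clean_nonzero[OF swap_ok[OF St] k] unfolding N1_def by blast
      have "mequiv (transpose N) N'" using mequiv_trans[OF mequiv_right[OF invertible_swm] N'(1)[unfolded N1_def]] .
      hence "mequiv N (transpose N')" using mequiv_transpose by fastforce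
      thus ?thesis using N'(2) by (auto simp: clean_transpose)
    qed
  qed
qed

lemma diag_exists_aux:
  fixes M :: "int^'n::finite^'n"
  shows "finite S \<Longrightarrow> \<exists>N. mequiv M N \<and> (\<forall>i\<in>S. clean i N)"
proof (induction S rule: finite_induct)
  case empty thus ?case using mequiv_refl by blast
next
  case (insert k S)
  then obtain N where "mequiv M N" "\<forall>i\<in>S. clean i N" by blast
  thus ?case using clean_any[of S N k] insert(2) mequiv_trans by blast
qed

lemma diag_exists:
  fixes M :: "int^'n::finite^'n"
  shows "\<exists>P Q N::int^'n^'n. invertible P \<and> invertible Q \<and> N = P ** M ** Q \<and> (\<forall>i j. i \<noteq> j \<longrightarrow> N$i$j = 0)"
proof -
  obtain N where "mequiv M N" "\<forall>i\<in>UNIV. clean i N" using diag_exists_aux[of UNIV M] by auto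
  then obtain P Q :: "int^'n^'n" where "invertible P" "invertible Q" "N = P ** M ** Q" "\<forall>i j. i \<noteq> j \<longrightarrow> N$i$j = 0"
    unfolding mequiv_def clean_def by auto
  thus ?thesis by blast
qed

lemma diag_mult:
  fixes D :: "int^'n::finite^'n"
  assumes "\<forall>i j. i \<noteq> j \<longrightarrow> D$i$j = 0"
  shows "(D *v u)$i = D$i$i * u$i"
proof -
  have "(D *v u)$i = (\<Sum>j\<in>UNIV. D$i$j * u$j)" by (simp add: matrix_vector_mult_def)
  also have "\<dots> = (\<Sum>j\<in>UNIV. if j = i then D$i$i * u$i else 0)"
    by (rule sum.cong) (use assms in auto)
  finally have "(D *v u)$i = (\<Sum>j\<in>UNIV. if j = i then D$i$i * u$i else 0)" .
  thus ?thesis by simp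
qed

lemma image_char:
  fixes M D P P' Q Q' :: "int^'n::finite^'n"
  assumes D: "D = P ** M ** Q" "\<forall>i j. i \<noteq> j \<longrightarrow> D$i$j = 0"
    and P: "P ** P' = mat 1" "P' ** P = mat 1" and Q: "Q ** Q' = mat 1" "Q' ** Q = mat 1"
  shows "(\<exists>w. v = M *v w) \<longleftrightarrow> (\<forall>i. D$i$i dvd (P *v v)$i)"
proof
  have PM: "P ** M = D ** Q'" using D(1) Q by (metis matrix_mul_assoc matrix_mul_rid)
  assume "\<exists>w. v = M *v w"
  then obtain w where w: "v = M *v w" by blast
  have "P *v v = D *v (Q' *v w)" using PM w by (simp add: matrix_vector_mul_assoc)
  thus "\<forall>i. D$i$i dvd (P *v v)$i" using diag_mult[OF D(2)] by simp
next
  have MQ: "M ** Q = P' ** D" using D(1) P by (metis matrix_mul_assoc matrix_mul_lid)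
  assume "\<forall>i. D$i$i dvd (P *v v)$i"
  hence "\<forall>i. \<exists>t. (P *v v)$i = D$i$i * t" by (auto simp: dvd_def)
  then obtain f where f: "\<forall>i. (P *v v)$i = D$i$i * f i" by metis
  define u where "u = (\<chi> i. f i)"
  have "P *v v = D *v u" using f diag_mult[OF D(2)] by (simp add: vec_eq_iff u_def)
  hence "P' *v (P *v v) = P' *v (D *v u)" by simp
  hence "v = M *v (Q *v u)" using MQ P by (simp add: matrix_vector_mul_assoc)
  thus "\<exists>w. v = M *v w" by blast
qed

lemma vec_box_bij:
  fixes A :: "'n::finite \<Rightarrow> 'a set"
  shows "bij_betw (\<lambda>x. \<lambda>i. x$i) {x::'a^'n. \<forall>i. x$i \<in> A i} (PiE UNIV A)"
    by (rule bij_betw_byWitness[where f'="\<lambda>f. vec_lambda f"]) (auto simp: PiE_iff)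

lemma card_vec_box:
  fixes A :: "'n::finite \<Rightarrow> 'a set"
  shows "card {x::'a^'n. \<forall>i. x$i \<in> A i} = (\<Prod>i\<in>UNIV. card (A i))"
proof -
  have "bij_betw (\<lambda>x. \<lambda>i. x$i) {x::'a^'n. \<forall>i. x$i \<in> A i} (PiE UNIV A)"
    by (rule vec_box_bij)
  hence "card {x::'a^'n. \<forall>i. x$i \<in> A i} = card (PiE UNIV A)" by (rule bij_betw_same_card)
  thus ?thesis by (simp add: card_PiE)
qed

lemma finite_vec_box:
  fixes A :: "'n::finite \<Rightarrow> 'a set"
  assumes "\<And>i. finite (A i)"
  shows "finite {x::'a^'n. \<forall>i. x$i \<in> A i}"
  using bij_betw_finite[OF vec_box_bij[of A]] assms by (simp add: finite_PiE)

lemma orbit_count: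
  assumes fin: "finite R" and inv: "\<And>x. x \<in> R \<Longrightarrow> t x \<in> R" "\<And>x. x \<in> R \<Longrightarrow> t (t x) = x"
  shows "2 * card ((\<lambda>x. {x, t x}) ` R) = card R + card {x\<in>R. t x = x}"
proof -
  define K where "K = (\<lambda>x. {x, t x}) ` R"
  have finK: "finite K" unfolding K_def using fin by simp
  have UK: "\<Union>K = R" unfolding K_def using inv by auto
  have disj: "\<forall>A\<in>K. \<forall>B\<in>K. A \<noteq> B \<longrightarrow> A \<inter> B = {}"
    unfolding K_def using inv by auto (metis)+
  have "card R = (\<Sum>k\<in>K. card k)"
    using card_Union_disjoint[of K] finK disj UK unfolding K_def pairwise_def disjnt_def
    by (metis (no_types, lifting) finite.emptyI finite.insertI image_iff)
  moreover have "(\<Sum>k\<in>K. card k + (if card k = 1 then 1 else 0)) = (\<Sum>k\<in>K. 2)"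
    by (rule sum.cong) (auto simp: K_def card_insert_if)
  moreover have "(\<Sum>k\<in>K. (if card k = 1 then 1 else 0::nat)) = card {k\<in>K. card k = 1}"
  proof -
    have "{k\<in>K. card k = 1} = K \<inter> {k. card k = 1}" by auto
    thus ?thesis using finK by (simp add: sum.If_cases)
  qed
  moreover have "card {k\<in>K. card k = 1} = card {x\<in>R. t x = x}"
  proof -
    have "bij_betw (\<lambda>x. {x}) {x\<in>R. t x = x} {k\<in>K. card k = 1}"
    proof (rule bij_betw_byWitness[where f'="\<lambda>k. the_elem k"])
      show "(\<lambda>x. {x}) ` {x \<in> R. t x = x} \<subseteq> {k \<in> K. card k = 1}"
        unfolding K_def by (auto simp: image_iff)
      show "the_elem ` {k \<in> K. card k = 1} \<subseteq> {x \<in> R. t x = x}"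
        unfolding K_def by (auto simp: card_insert_if split: if_splits)
      show "\<forall>k\<in>{k \<in> K. card k = 1}. {the_elem k} = k"
        unfolding K_def by (auto simp: card_insert_if split: if_splits)
    qed auto
    thus ?thesis by (simp add: bij_betw_same_card)
  qed
  ultimately show ?thesis unfolding K_def[symmetric] by (simp add: sum.distrib)
qed

lemma coord_lhs:
  fixes m c :: int assumes m: "m > 0"
  shows "{t\<in>{0..<m}. (-t - c) mod m = t} = {t\<in>{0..<m}. m dvd 2*t + c}"
proof -
  have "(-t - c) mod m = t \<longleftrightarrow> m dvd 2*t + c" if "t \<in> {0..<m}" for t
  proof -
    have tt: "t mod m = t" using that by simp
    have "(-t - c) mod m = t \<longleftrightarrow> (-t - c) mod m = t mod m" using tt by simp
    also have "\<dots> \<longleftrightarrow> m dvd (-t - c) - t" by (rule mod_eq_dvd_iff)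
    also have "(-t - c) - t = -(2*t + c)" by simp
    also have "m dvd - (2*t+c) \<longleftrightarrow> m dvd 2*t + c" by (rule dvd_minus_iff)
    finally show ?thesis .
  qed
  thus ?thesis by auto
qed

lemma coord_odd:
  fixes m c :: int assumes m: "m > 0" "odd m"
  shows "card {t\<in>{0..<m}. m dvd 2*t + c} = 1"
proof -
  define t0 where "t0 = ((m - 1) div 2 * c) mod m"
  have t0r: "t0 \<in> {0..<m}" unfolding t0_def using m by simp
  have h2: "2 * ((m - 1) div 2) = m - 1" using m by simp
  have "2 * ((m - 1) div 2 * c) = (2 * ((m - 1) div 2)) * c" by (simp only: mult.assoc)
  also have "\<dots> = (m - 1) * c" using h2 by simp
  finally have "2 * ((m - 1) div 2 * c) + c = m * c" by (simp add: algebra_simps)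
  hence d0: "m dvd 2 * ((m - 1) div 2 * c) + c" by simp
  have "m dvd 2 * t0 + c"
  proof -
    have "(2 * t0 + c) mod m = (2 * ((m - 1) div 2 * c) + c) mod m"
      unfolding t0_def by (metis mod_add_left_eq mod_mult_right_eq)
    thus ?thesis using d0 by (simp add: mod_eq_0_iff_dvd[symmetric])
  qed
  moreover have "t = t0" if "t \<in> {0..<m}" "m dvd 2*t + c" for t
  proof -
    have "m dvd (2*t + c) - (2*t0 + c)" using that(2) \<open>m dvd 2 * t0 + c\<close> by (rule dvd_diff)
    hence "m dvd 2 * (t - t0)" by (simp add: algebra_simps)
    moreover have "coprime m 2" using m by simp
    ultimately have "m dvd t - t0" using coprime_dvd_mult_right_iff by blast
    hence "t mod m = t0 mod m" by (simp add: mod_eq_dvd_iff)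
    thus ?thesis using that t0r by simp
  qed
  ultimately have "{t\<in>{0..<m}. m dvd 2*t + c} = {t0}" using t0r by blast
  thus ?thesis by simp
qed

lemma coord_even:
  fixes m c :: int assumes m: "m > 0" "even m"
  shows "card {t\<in>{0..<m}. m dvd 2*t + c} = (if even c then 2 else 0)"
proof (cases "even c")
  case False
  have "\<not> m dvd 2*t + c" for t
  proof
    assume "m dvd 2*t + c"
    hence "2 dvd 2*t + c" using m(2) dvd_trans by blast
    thus False using False by simp
  qed
  thus ?thesis using False by simp
next
  case True
  obtain h where h: "m = 2 * h" using m by blast
  obtain e where e: "c = 2 * e" using True by blast
  have hp: "h > 0" using h m by simp
  define t0 where "t0 = (- e) mod h"
  have t0r: "0 \<le> t0" "t0 < h" unfolding t0_def using hp by simp_all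
  have iff: "m dvd 2*t + c \<longleftrightarrow> h dvd t + e" for t
    unfolding h e by (metis distrib_left_numeral dvd_mult_cancel_left zero_neq_numeral)
  have "{t\<in>{0..<m}. m dvd 2*t + c} = {t0, t0 + h}"
  proof (rule set_eqI, rule iffI)
    fix t assume "t \<in> {t\<in>{0..<m}. m dvd 2*t + c}"
    hence t: "0 \<le> t" "t < 2*h" "h dvd t + e" using iff h by auto
    hence "t mod h = (-e) mod h" by (simp add: mod_eq_dvd_iff)
    hence tm: "t mod h = t0" unfolding t0_def .
    have "t div h < 2" using t hp by (smt (verit, ccfv_SIG) div_pos_geq div_pos_pos_trivial)
    moreover have "t div h \<ge> 0" using t(1) hp by (simp add: pos_imp_zdiv_nonneg_iff)
    ultimately have "t div h = 0 \<or> t div h = 1" by auto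
    moreover have "t = h * (t div h) + t mod h" by simp
    ultimately show "t \<in> {t0, t0 + h}" using tm by auto
  next
    fix t assume t: "t \<in> {t0, t0 + h}"
    have "((-e) mod h + e) mod h = (-e + e) mod h" by (rule mod_add_left_eq)
    hence "h dvd t0 + e" unfolding t0_def by (simp add: dvd_eq_mod_eq_0)
    moreover have "(t0 + h) + e = (t0 + e) + h" by simp
    hence "h dvd (t0 + h) + e" using \<open>h dvd t0 + e\<close> by (metis dvd_add dvd_refl)
    ultimately have "h dvd t + e" using t by auto
    thus "t \<in> {t\<in>{0..<m}. m dvd 2*t + c}" using t t0r h iff by auto
  qed
  thus ?thesis using True hp by simp
qed

lemma coord_count:
  fixes a c :: int assumes a: "a \<noteq> 0"
  shows "card {t\<in>{0..<\<bar>a\<bar>}. (-t - c) mod \<bar>a\<bar> = t} = card {t\<in>{0::int,1}. (a*t) mod 2 = c mod 2}"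
proof -
  have m: "\<bar>a\<bar> > 0" using a by simp
  show ?thesis
  proof (cases "even a")
    case True
    have z: "(a*t) mod 2 = 0" for t using True by simp
    have "{t\<in>{0::int,1}. (a*t) mod 2 = c mod 2} = (if even c then {0,1} else {})"
    proof (cases "even c")
      case True thus ?thesis using z by auto
    next
      case False hence "c mod 2 = 1" by presburger
      thus ?thesis using z False by auto
    qed
    thus ?thesis unfolding coord_lhs[OF m] using coord_even[OF m] True by simp
  next
    case False
    hence a1: "a mod 2 = 1" by presburger
    have c01: "c mod 2 = 0 \<or> c mod 2 = 1" by presburger
    have "{t\<in>{0::int,1}. (a*t) mod 2 = c mod 2} = {t\<in>{0::int,1}. t = c mod 2}"
      using a1 by auto
    also have "\<dots> = {c mod 2}" using c01 by auto
    finally have "{t\<in>{0::int,1}. (a*t) mod 2 = c mod 2} = {c mod 2}" .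
    thus ?thesis unfolding coord_lhs[OF m] using coord_odd[OF m] False by simp
  qed
qed

definition md2 :: "int^'n::finite \<Rightarrow> int^'n" where "md2 v = (\<chi> i. v$i mod 2)"

lemma md2_mv:
  fixes A :: "int^'n::finite^'m::finite"
  assumes "md2 x = md2 y" shows "md2 (A *v x) = md2 (A *v y)"
proof -
  have xy: "x$j mod 2 = y$j mod 2" for j using assms unfolding md2_def vec_eq_iff by simp
  have "(\<Sum>j\<in>UNIV. A$i$j * x$j) mod 2 = (\<Sum>j\<in>UNIV. A$i$j * y$j) mod 2" for i
  proof -
    have "(\<Sum>j\<in>UNIV. A$i$j * x$j) mod 2 = (\<Sum>j\<in>UNIV. (A$i$j * x$j) mod 2) mod 2"
      by (simp add: mod_sum_eq)
    also have "\<dots> = (\<Sum>j\<in>UNIV. (A$i$j * y$j) mod 2) mod 2"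
      using xy by (metis mod_mult_right_eq)
    also have "\<dots> = (\<Sum>j\<in>UNIV. A$i$j * y$j) mod 2" by (simp add: mod_sum_eq)
    finally show ?thesis .
  qed
  thus ?thesis unfolding md2_def matrix_vector_mult_def vec_eq_iff by simp
qed

lemma md2_md2[simp]: "md2 (md2 x) = md2 x" unfolding md2_def by simp

lemma md2_01: "(\<forall>i. x$i \<in> {0,1}) \<Longrightarrow> md2 x = x"
  unfolding md2_def vec_eq_iff by (metis insert_iff singletonD mod_0 mod_by_1 one_mod_two_eq_one vec_lambda_beta)

lemma md2_range: "md2 x $ i \<in> {0, 1}"
  unfolding md2_def by (simp, presburger)

lemma O_count_alt: "O_count B b = card {x. (\<forall>i. x$i \<in> {0,1}) \<and> md2 (B *v x) = md2 b}"
  unfolding O_count_def md2_def vec_eq_iff by simp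

lemma O_transport:
  fixes M D P P' Q Q' :: "int^'n::finite^'n"
  assumes D: "D = P ** M ** Q"
    and P: "P ** P' = mat 1" "P' ** P = mat 1" and Q: "Q ** Q' = mat 1" "Q' ** Q = mat 1"
  shows "O_count M c = O_count D (P *v c)"
proof -
  have PM: "D ** Q' = P ** M" using D Q by (metis matrix_mul_assoc matrix_mul_rid)
  have MQ: "M ** Q = P' ** D" using D P by (metis matrix_mul_assoc matrix_mul_lid)
  define f where "f x = md2 (Q' *v x)" for x :: "int^'n"
  define g where "g y = md2 (Q *v y)" for y :: "int^'n"
  have "bij_betw f {x. (\<forall>i. x$i \<in> {0,1}) \<and> md2 (M *v x) = md2 c}
                    {y. (\<forall>i. y$i \<in> {0,1}) \<and> md2 (D *v y) = md2 (P *v c)}"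
  proof (rule bij_betw_byWitness[where f'=g])
    show "\<forall>x\<in>{x. (\<forall>i. x$i \<in> {0,1}) \<and> md2 (M *v x) = md2 c}. g (f x) = x"
    proof
      fix x assume x: "x \<in> {x. (\<forall>i. x$i \<in> {0,1}) \<and> md2 (M *v x) = md2 c}"
      have "g (f x) = md2 (Q *v (Q' *v x))" unfolding g_def f_def by (rule md2_mv) simp
      also have "\<dots> = md2 x" using Q by (simp add: matrix_vector_mul_assoc)
      finally show "g (f x) = x" using md2_01 x by auto
    qed
    show "\<forall>y\<in>{y. (\<forall>i. y$i \<in> {0,1}) \<and> md2 (D *v y) = md2 (P *v c)}. f (g y) = y"
    proof
      fix y assume y: "y \<in> {y. (\<forall>i. y$i \<in> {0,1}) \<and> md2 (D *v y) = md2 (P *v c)}"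
      have "f (g y) = md2 (Q' *v (Q *v y))" unfolding g_def f_def by (rule md2_mv) simp
      also have "\<dots> = md2 y" using Q by (simp add: matrix_vector_mul_assoc)
      finally show "f (g y) = y" using md2_01 y by auto
    qed
    show "f ` {x. (\<forall>i. x$i \<in> {0,1}) \<and> md2 (M *v x) = md2 c} \<subseteq> {y. (\<forall>i. y$i \<in> {0,1}) \<and> md2 (D *v y) = md2 (P *v c)}"
    proof clarify
      fix x assume x: "\<forall>i. x$i \<in> {0,1}" "md2 (M *v x) = md2 c"
      have "md2 (D *v f x) = md2 (D *v (Q' *v x))" unfolding f_def by (rule md2_mv) simp
      also have "\<dots> = md2 (P *v (M *v x))" using PM by (simp add: matrix_vector_mul_assoc)
      also have "\<dots> = md2 (P *v c)" by (rule md2_mv) (rule x(2))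
      finally show "(\<forall>i. f x $ i \<in> {0,1}) \<and> md2 (D *v f x) = md2 (P *v c)"
        unfolding f_def using md2_range by auto
    qed
    show "g ` {y. (\<forall>i. y$i \<in> {0,1}) \<and> md2 (D *v y) = md2 (P *v c)} \<subseteq> {x. (\<forall>i. x$i \<in> {0,1}) \<and> md2 (M *v x) = md2 c}"
    proof clarify
      fix y assume y: "\<forall>i. y$i \<in> {0,1}" "md2 (D *v y) = md2 (P *v c)"
      have "md2 (M *v g y) = md2 (M *v (Q *v y))" unfolding g_def by (rule md2_mv) simp
      also have "\<dots> = md2 (P' *v (D *v y))" using MQ by (simp add: matrix_vector_mul_assoc)
      also have "\<dots> = md2 (P' *v (P *v c))" by (rule md2_mv) (rule y(2))
      also have "\<dots> = md2 c" using P by (simp add: matrix_vector_mul_assoc)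
      finally show "(\<forall>i. g y $ i \<in> {0,1}) \<and> md2 (M *v g y) = md2 c"
        unfolding g_def using md2_range by auto
    qed
  qed
  thus ?thesis unfolding O_count_alt by (rule bij_betw_same_card)
qed

definition Erel :: "int^'n::finite^'n \<Rightarrow> int^'n \<Rightarrow> int^'n \<Rightarrow> int^'n \<Rightarrow> bool" where
  "Erel M c z z' \<longleftrightarrow> (\<exists>w. z = z' + M *v w \<or> z = - z' - c + M *v w)"

definition modv :: "int^'n::finite \<Rightarrow> int^'n \<Rightarrow> int^'n" where "modv m v = (\<chi> i. v$i mod m$i)"

lemma modv_modv[simp]: "modv m (modv m x) = modv m x" unfolding modv_def by simp

lemma modv_neg: "modv m (- modv m x - c) = modv m (- x - c)"
  unfolding modv_def vec_eq_iff by (simp add: mod_eq_dvd_iff)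

lemma modv_eq: "modv m x = modv m y \<longleftrightarrow> (\<forall>i. m$i dvd x$i - y$i)"
  unfolding modv_def vec_eq_iff by (simp add: mod_eq_dvd_iff)

lemma classes_count:
  fixes M :: "int^'n::finite^'n" and c :: "int^'n"
  shows "\<exists>\<kappa> :: int^'n \<Rightarrow> (int^'n) set. (\<forall>z z'. Erel M c z z' \<longleftrightarrow> \<kappa> z = \<kappa> z') \<and>
     (det M = 0 \<longrightarrow> infinite (range \<kappa>)) \<and>
     (det M \<noteq> 0 \<longrightarrow> finite (range \<kappa>) \<and> 2 * card (range \<kappa>) = nat \<bar>det M\<bar> + O_count M c)"
proof -
  obtain P Q D :: "int^'n^'n" where PQD: "invertible P" "invertible Q" "D = P ** M ** Q"
    "\<forall>i j. i \<noteq> j \<longrightarrow> D$i$j = 0" using diag_exists[of M] by blast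
  obtain P' where P: "P ** P' = mat 1" "P' ** P = mat 1" using PQD(1) unfolding invertible_def by blast
  obtain Q' where Q: "Q ** Q' = mat 1" "Q' ** Q = mat 1" using PQD(2) unfolding invertible_def by blast
  define a where "a i = D$i$i" for i
  define m where "m = (\<chi> i. \<bar>a i\<bar>)"
  define c' where "c' = P *v c"
  define r where "r = modv m"
  define \<tau> where "\<tau> x = r (- x - c')" for x
  define \<kappa> where "\<kappa> z = {r (P *v z), \<tau> (r (P *v z))}" for z
  have Dv: "(D *v u)$i = a i * u$i" for u i unfolding a_def by (rule diag_mult[OF PQD(4)])
  have ic: "(\<exists>w. v = M *v w) \<longleftrightarrow> (\<forall>i. a i dvd (P *v v)$i)" for v
    unfolding a_def by (rule image_char[OF PQD(3,4) P Q])
  have req: "r x = r y \<longleftrightarrow> (\<forall>i. a i dvd x$i - y$i)" for x y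
    unfolding r_def modv_eq m_def by simp
  have \<tau>r: "\<tau> (r x) = r (- x - c')" for x unfolding \<tau>_def r_def by (rule modv_neg)
  have \<tau>\<tau>: "\<tau> (\<tau> x) = r x" for x unfolding \<tau>_def r_def using modv_neg[of m "- x - c'" c'] by simp
  have rr: "r (r x) = r x" for x unfolding r_def by simp
  have kap: "\<kappa> z = {r (P *v z), r (- (P *v z) - c')}" for z unfolding \<kappa>_def \<tau>r ..
  have rel: "Erel M c z z' \<longleftrightarrow> \<kappa> z = \<kappa> z'" for z z'
  proof -
    define y where "y = P *v z"
    define y' where "y' = P *v z'"
    have "Erel M c z z' \<longleftrightarrow> (\<exists>w. z - z' = M *v w) \<or> (\<exists>w. z + z' + c = M *v w)"
      unfolding Erel_def by (auto simp: algebra_simps)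
    also have "\<dots> \<longleftrightarrow> (\<forall>i. a i dvd (P *v (z - z'))$i) \<or> (\<forall>i. a i dvd (P *v (z + z' + c))$i)"
      unfolding ic ..
    also have "\<dots> \<longleftrightarrow> r y = r y' \<or> r y = r (- y' - c')"
      unfolding req y_def y'_def c'_def
      by (simp add: matrix_vector_mult_diff_distrib matrix_vector_right_distrib algebra_simps)
    also have "\<dots> \<longleftrightarrow> \<kappa> z = \<kappa> z'"
    proof -
      have k1: "\<kappa> z = {r y, \<tau> (r y)}" "\<kappa> z' = {r y', \<tau> (r y')}" unfolding \<kappa>_def y_def y'_def by simp_all
      have t': "r (- y' - c') = \<tau> (r y')" using \<tau>r by simp
      have tt: "\<tau> (\<tau> (r y')) = r y'" "\<tau> (\<tau> (r y)) = r y" using \<tau>\<tau> rr by simp_all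
      show ?thesis unfolding k1 t' using tt by (auto simp: doubleton_eq_iff)
    qed
    finally show ?thesis .
  qed
  have detP: "det P \<noteq> 0" using P by (metis det_I det_mul mult_eq_0_iff zero_neq_one)
  have detQ: "det Q \<noteq> 0" using Q by (metis det_I det_mul mult_eq_0_iff zero_neq_one)
  have detPu: "\<bar>det P\<bar> = 1" using P by (metis det_I det_mul zmult_eq_1_iff abs_1 abs_neg_one)
  have detQu: "\<bar>det Q\<bar> = 1" using Q by (metis det_I det_mul zmult_eq_1_iff abs_1 abs_neg_one)
  have detD: "det D = (\<Prod>i\<in>UNIV. a i)" unfolding a_def by (rule det_diagonal) (use PQD(4) in auto)
  have detDM: "\<bar>det D\<bar> = \<bar>det M\<bar>" using PQD(3) detPu detQu by (simp add: det_mul abs_mult)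
  show ?thesis
  proof (intro exI[of _ \<kappa>] conjI impI allI)
    show "Erel M c z z' \<longleftrightarrow> \<kappa> z = \<kappa> z'" for z z' by (rule rel)
  next
    assume "det M = 0"
    hence "det D = 0" using detDM by simp
    then obtain j where j: "a j = 0" unfolding detD by auto
    define e where "e t = P' *v (\<chi> i. if i = j then t else 0)" for t :: int
    have Pe: "P *v e t = (\<chi> i. if i = j then t else 0)" for t
      unfolding e_def using P by (simp add: matrix_vector_mul_assoc)
    have rj: "r x $ j = x $ j" for x unfolding r_def modv_def m_def using j by simp
    define b where "b = \<bar>c'$j\<bar>"
    have "inj_on (\<lambda>t. \<kappa> (e t)) {b<..}"
    proof
      fix t s assume t: "t \<in> {b<..}" and s: "s \<in> {b<..}" and eq: "\<kappa> (e t) = \<kappa> (e s)"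
      have "r (P *v e t) \<in> \<kappa> (e s)" using eq unfolding kap by auto
      hence "r (P *v e t) = r (P *v e s) \<or> r (P *v e t) = r (- (P *v e s) - c')" unfolding kap by auto
      hence "t = s \<or> t = - s - c'$j" using rj[of "P *v e t"] rj[of "P *v e s"] rj[of "- (P *v e s) - c'"]
        unfolding Pe by auto
      thus "t = s" using t s unfolding b_def by auto
    qed
    moreover have "infinite {b<..}" by (metis infinite_Ioi)
    ultimately have "infinite ((\<lambda>t. \<kappa> (e t)) ` {b<..})" using finite_imageD by blast
    thus "infinite (range \<kappa>)" by (meson finite_subset image_subsetI rangeI)
  next
    assume dM: "det M \<noteq> 0"
    have anz: "a i \<noteq> 0" for i
    proof
      assume "a i = 0"
      hence "prod a UNIV = 0" by (meson UNIV_I finite prod_zero_iff)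
      thus False using dM detDM unfolding detD by (metis abs_0_eq)
    qed
    define R where "R = {x. \<forall>i. x$i \<in> {0..<\<bar>a i\<bar>}}"
    have rR: "r x \<in> R" for x unfolding R_def r_def modv_def m_def using anz by simp
    have rid: "x \<in> R \<Longrightarrow> r x = x" for x unfolding R_def r_def modv_def m_def vec_eq_iff by simp
    have rk: "range \<kappa> = (\<lambda>x. {x, \<tau> x}) ` R"
    proof
      show "range \<kappa> \<subseteq> (\<lambda>x. {x, \<tau> x}) ` R" unfolding \<kappa>_def using rR by auto
      show "(\<lambda>x. {x, \<tau> x}) ` R \<subseteq> range \<kappa>"
      proof clarify
        fix x assume x: "x \<in> R"
        have "P *v (P' *v x) = x" using P by (simp add: matrix_vector_mul_assoc)
        hence "\<kappa> (P' *v x) = {x, \<tau> x}" unfolding \<kappa>_def using rid[OF x] by simp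
        thus "{x, \<tau> x} \<in> range \<kappa>" by (metis rangeI)
      qed
    qed
    have finR: "finite R" unfolding R_def by (rule finite_vec_box) simp
    have oc: "2 * card ((\<lambda>x. {x, \<tau> x}) ` R) = card R + card {x\<in>R. \<tau> x = x}"
      by (rule orbit_count[OF finR]) (use rR \<tau>\<tau> rid in \<open>auto simp: \<tau>_def\<close>)
    have cR: "card R = (\<Prod>i\<in>UNIV. nat \<bar>a i\<bar>)" unfolding R_def card_vec_box by simp
    have "int (card R) = \<bar>det M\<bar>" unfolding cR detDM[symmetric] detD by (simp add: abs_prod)
    hence cR2: "card R = nat \<bar>det M\<bar>" by simp
    have fixR: "{x\<in>R. \<tau> x = x} = {x. \<forall>i. x$i \<in> {t\<in>{0..<\<bar>a i\<bar>}. (- t - c'$i) mod \<bar>a i\<bar> = t}}"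
      unfolding R_def \<tau>_def r_def modv_def m_def vec_eq_iff by auto
    have "O_count M c = O_count D c'" unfolding c'_def by (rule O_transport[OF PQD(3) P Q])
    also have "\<dots> = card {x. \<forall>i. x$i \<in> {t\<in>{0::int,1}. (a i * t) mod 2 = c'$i mod 2}}"
      unfolding O_count_def Dv by (rule arg_cong[where f=card]) auto
    also have "\<dots> = card {x\<in>R. \<tau> x = x}"
      unfolding fixR card_vec_box using coord_count[OF anz] by simp
    finally have Oc: "O_count M c = card {x\<in>R. \<tau> x = x}" .
    show "finite (range \<kappa>)" unfolding rk using finR by simp
    show "2 * card (range \<kappa>) = nat \<bar>det M\<bar> + O_count M c"
      unfolding rk oc cR2 Oc ..
  qed
qed

lemma neg_mv: "(- A) *v x = - (A *v (x::'a::ring_1^'n::finite))"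
  by (simp add: matrix_vector_mult_def vec_eq_iff sum_negf)
lemma neg_mm1: "(- A) ** B = - (A ** (B::'a::ring_1^'n::finite^'m::finite))"
  by (simp add: matrix_matrix_mult_def vec_eq_iff sum_negf)
lemma neg_mm2: "A ** (- B) = - ((A::'a::ring_1^'n::finite^'m::finite) ** B)"
  by (simp add: matrix_matrix_mult_def vec_eq_iff sum_negf)

lemma matrix_inv_eq:
  fixes A B :: "real^'n::finite^'n"
  assumes "A ** B = mat 1" "B ** A = mat 1" shows "matrix_inv A = B"
proof -
  have ex: "\<exists>A'. A ** A' = mat 1 \<and> A' ** A = mat 1" using assms by blast
  define C where "C = matrix_inv A"
  have C: "A ** C = mat 1 \<and> C ** A = mat 1" unfolding C_def matrix_inv_def by (rule someI_ex[OF ex])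
  have "C = C ** (A ** B)" using assms by simp
  also have "\<dots> = B" using C by (simp add: matrix_mul_assoc)
  finally show ?thesis unfolding C_def .
qed

lemma minv1: "matrix_inv (mat 1 :: real^'n::finite^'n) = mat 1"
  by (rule matrix_inv_eq) simp_all
lemma minvm1: "matrix_inv (- mat 1 :: real^'n::finite^'n) = - mat 1"
  by (rule matrix_inv_eq) (simp_all add: neg_mm1 neg_mm2)

definition ofv :: "int^'n::finite \<Rightarrow> real^'n" where "ofv x = (\<chi> i. of_int (x$i))"
definition ofm :: "int^'n::finite^'n \<Rightarrow> real^'n^'n" where "ofm A = (\<chi> i j. of_int (A$i$j))"
definition toint :: "real^'n::finite \<Rightarrow> int^'n" where "toint z = (\<chi> i. \<lfloor>z$i\<rfloor>)"

lemma ofv_add: "ofv (x + y) = ofv x + ofv y" unfolding ofv_def by (simp add: vec_eq_iff)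
lemma ofv_diff: "ofv (x - y) = ofv x - ofv y" unfolding ofv_def by (simp add: vec_eq_iff)
lemma ofv_neg: "ofv (- x) = - ofv x" unfolding ofv_def by (simp add: vec_eq_iff)
lemma ofv_0: "ofv 0 = 0" unfolding ofv_def by (simp add: vec_eq_iff)
lemma ofv_inj: "ofv x = ofv y \<longleftrightarrow> x = y" unfolding ofv_def by (simp add: vec_eq_iff)
lemma toint_ofv[simp]: "toint (ofv x) = x" unfolding ofv_def toint_def by (simp add: vec_eq_iff)
lemma ofm_mv: "ofm A *v ofv x = ofv (A *v x)"
  unfolding ofm_def ofv_def matrix_vector_mult_def by (simp add: vec_eq_iff)
lemma ofv_toint: "(\<forall>i. z$i \<in> \<int>) \<Longrightarrow> ofv (toint z) = z"
  unfolding ofv_def toint_def vec_eq_iff by simp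
lemma det_ofm: "det (ofm A) = of_int (det A)"
  unfolding det_def ofm_def by (simp add: of_int_sum of_int_mult of_int_prod)

definition Gset :: "'n::finite aff set" where
  "Gset = {(ofv z, A) | z A. A = mat 1 \<or> A = - mat 1}"

lemma ofv_int: "(ofv z) $ i \<in> \<int>" unfolding ofv_def by simp

lemma Gamma_eq: "Gamma = (Gset :: 'n::finite aff set)"
proof
  show "Gamma \<subseteq> (Gset :: 'n aff set)"
  proof
    fix g :: "'n aff" assume "g \<in> Gamma"
    thus "g \<in> Gset"
    proof (induction rule: Gamma.induct)
      case (transl z)
      thus ?case unfolding Gset_def using ofv_toint[of z] by (metis (mono_tags, lifting) mem_Collect_eq)
    next
      case minus
      have "(0::real^'n, - mat 1 :: real^'n^'n) = (ofv 0, - mat 1)" by (simp add: ofv_0)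
      thus ?case unfolding Gset_def by blast
    next
      case (mult g h)
      then obtain z A w B where g: "g = (ofv z, A)" "A = mat 1 \<or> A = - mat 1"
        and h: "h = (ofv w, B)" "B = mat 1 \<or> B = - mat 1" unfolding Gset_def by blast
      have "aff_mult g h = (ofv (z + (if A = mat 1 then w else - w)), A ** B)"
        unfolding aff_mult_def g h using g(2) by (auto simp: ofv_add ofv_neg neg_mv)
      moreover have "A ** B = mat 1 \<or> A ** B = - mat 1" using g(2) h(2) by (auto simp: neg_mm1 neg_mm2)
      ultimately show ?case unfolding Gset_def by blast
    next
      case (inv g)
      then obtain z A where g: "g = (ofv z, A)" "A = mat 1 \<or> A = - mat 1" unfolding Gset_def by blast
      have "aff_inv g = (ofv (if A = mat 1 then - z else z), A)"
        unfolding aff_inv_def g using g(2) by (auto simp: minv1 minvm1 ofv_neg neg_mv)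
      thus ?case unfolding Gset_def using g(2) by blast
    qed
  qed
  show "(Gset :: 'n aff set) \<subseteq> Gamma"
  proof
    fix g :: "'n aff" assume "g \<in> Gset"
    then obtain z A where g: "g = (ofv z, A)" "A = mat 1 \<or> A = - mat 1" unfolding Gset_def by blast
    have t: "(ofv z, mat 1) \<in> Gamma" by (rule Gamma.transl) (simp add: ofv_int)
    have "aff_mult (ofv z, mat 1) (0, - mat 1) = (ofv z, - mat 1)" unfolding aff_mult_def by simp
    hence "(ofv z, - mat 1) \<in> Gamma" using Gamma.mult[OF t Gamma.minus] by simp
    thus "g \<in> Gamma" using g t by auto
  qed
qed

lemma mat1_neq: "(mat 1 :: real^'n::finite^'n) \<noteq> - mat 1"
proof
  fix i :: 'n
  assume h: "(mat 1 :: real^'n^'n) = - mat 1"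
  have "(mat 1 :: real^'n^'n) $ i $ i = (- mat 1 :: real^'n^'n) $ i $ i" using h by (rule arg_cong[where f="\<lambda>M. M $ i $ i"])
  thus False by (simp add: mat_def)
qed

lemma ofm_1m: "ofm (mat 1 - A) = mat 1 - ofm A" unfolding ofm_def mat_def by (simp add: vec_eq_iff)
lemma ofm_1p: "ofm (mat 1 + A) = mat 1 + ofm A" unfolding ofm_def mat_def by (simp add: vec_eq_iff)

lemma phi_formula:
  fixes D :: "real^'n::finite^'n"
  assumes "invertible D"
  shows "xi (d, D) (z, mat 1) = (D *v z, mat 1)" and "xi (d,D) (z, - mat 1) = (d + D *v z + d, - mat 1)"
proof -
  obtain Dinv where Di: "D ** Dinv = mat 1" "Dinv ** D = mat 1" using assms unfolding invertible_def by blast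
  have mi: "matrix_inv D = Dinv" by (rule matrix_inv_eq[OF Di])
  have dd: "D *v (Dinv *v d) = d" using Di by (simp add: matrix_vector_mul_assoc)
  have ai: "aff_inv (d, D) = (- (Dinv *v d), Dinv)" unfolding aff_inv_def fst_conv snd_conv mi ..
  have "xi (d, D) (z, mat 1) = aff_mult (d + D *v z, D) (- (Dinv *v d), Dinv)"
    unfolding xi_def ai by (simp add: aff_mult_def)
  also have "\<dots> = (d + D *v z - D *v (Dinv *v d), D ** Dinv)" by (simp add: aff_mult_def vec.neg)
  also have "\<dots> = (D *v z, mat 1)" unfolding dd Di(1) by simp
  finally show "xi (d, D) (z, mat 1) = (D *v z, mat 1)" .
  have "xi (d, D) (z, - mat 1) = aff_mult (d + D *v z, - D) (- (Dinv *v d), Dinv)"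
    unfolding xi_def ai by (simp add: aff_mult_def neg_mm2)
  also have "\<dots> = (d + D *v z + D *v (Dinv *v d), - (D ** Dinv))" by (simp add: aff_mult_def vec.neg neg_mv neg_mm1)
  also have "\<dots> = (d + D *v z + d, - mat 1)" unfolding dd Di(1) by simp
  finally show "xi (d,D) (z, - mat 1) = (d + D *v z + d, - mat 1)" .
qed

lemma conj_all:
  fixes D :: "real^'n::finite^'n" and Di :: "int^'n^'n"
  assumes inv: "invertible D" and DD: "D = ofm Di" and dd: "d + d = ofv d2"
    and B: "B = mat 1 \<or> B = - mat 1" and A: "A' = mat 1 \<or> A' = - mat 1"
  shows "aff_mult (aff_mult (ofv w, B) (ofv z', A')) (aff_inv (xi (d,D) (ofv w, B))) =
    (ofv (if B = mat 1 then z' + (if A' = mat 1 then mat 1 - Di else mat 1 + Di) *v w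
          else - z' - (if A' = mat 1 then d2 else - d2) + (if A' = mat 1 then mat 1 - Di else mat 1 + Di) *v w), A')"
proof -
  have m1: "ofv ((mat 1 - Di) *v w) = ofv w - D *v ofv w"
    unfolding ofm_mv[symmetric] ofm_1m DD[symmetric] by (simp add: matrix_vector_mult_diff_rdistrib)
  have p1: "ofv ((mat 1 + Di) *v w) = ofv w + D *v ofv w"
    unfolding ofm_mv[symmetric] ofm_1p DD[symmetric] by (simp add: matrix_vector_mult_add_rdistrib)
  have ne: "(mat 1 :: real^'n^'n) \<noteq> - mat 1" by (rule mat1_neq)
  have ne2: "(- mat 1 :: real^'n^'n) \<noteq> mat 1" using ne by metis
  have mm: "(- mat 1 :: real^'n^'n) ** - mat 1 = mat 1" by (simp add: neg_mm1 neg_mm2)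
  have ph1: "xi (d, D) (ofv w, mat 1) = (D *v ofv w, mat 1)" by (rule phi_formula(1)[OF inv])
  have ph2: "xi (d, D) (ofv w, - mat 1) = (d + D *v ofv w + d, - mat 1)" by (rule phi_formula(2)[OF inv])
  have i1: "aff_inv (D *v ofv w, mat 1) = (- (D *v ofv w), mat 1)"
    unfolding aff_inv_def by (simp add: minv1)
  have i2: "aff_inv (d + D *v ofv w + d, - mat 1) = (d + D *v ofv w + d, - mat 1)"
    unfolding aff_inv_def by (simp add: minvm1 neg_mv)
  from B show ?thesis
  proof
    assume b: "B = mat 1"
    from A show ?thesis
    proof
      assume a: "A' = mat 1"
      have "aff_mult (aff_mult (ofv w, mat 1) (ofv z', mat 1)) (- (D *v ofv w), mat 1)
        = (ofv w + ofv z' - D *v ofv w, mat 1)" by (simp add: aff_mult_def vec.neg)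
      moreover have "ofv w + ofv z' - D *v ofv w = ofv (z' + (mat 1 - Di) *v w)"
        unfolding ofv_add m1 by simp
      ultimately show ?thesis unfolding b a ph1 i1 by simp
    next
      assume a: "A' = - mat 1"
      have "aff_mult (aff_mult (ofv w, mat 1) (ofv z', - mat 1)) (- (D *v ofv w), mat 1)
        = (ofv w + ofv z' + D *v ofv w, - mat 1)" by (simp add: aff_mult_def vec.neg neg_mv)
      moreover have "ofv w + ofv z' + D *v ofv w = ofv (z' + (mat 1 + Di) *v w)"
        unfolding ofv_add p1 by simp
      ultimately show ?thesis unfolding b a ph1 i1 using ne2 by simp
    qed
  next
    assume b: "B = - mat 1"
    from A show ?thesis
    proof
      assume a: "A' = mat 1"
      have "aff_mult (aff_mult (ofv w, - mat 1) (ofv z', mat 1)) (d + D *v ofv w + d, - mat 1)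
        = (ofv w - ofv z' - (d + D *v ofv w + d), mat 1)" by (simp add: aff_mult_def vec.neg neg_mv mm)
      moreover have "ofv w - ofv z' - (d + D *v ofv w + d) = ofv (- z' - d2 + (mat 1 - Di) *v w)"
        unfolding ofv_add ofv_diff ofv_neg m1 dd[symmetric] by simp
      ultimately show ?thesis unfolding b a ph2 i2 using ne2 by simp
    next
      assume a: "A' = - mat 1"
      have "aff_mult (aff_mult (ofv w, - mat 1) (ofv z', - mat 1)) (d + D *v ofv w + d, - mat 1)
        = (ofv w - ofv z' + (d + D *v ofv w + d), - mat 1)" by (simp add: aff_mult_def vec.neg neg_mv mm)
      moreover have "ofv w - ofv z' + (d + D *v ofv w + d) = ofv (- z' - - d2 + (mat 1 + Di) *v w)"
        unfolding ofv_add ofv_diff ofv_neg p1 dd[symmetric] by simp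
      ultimately show ?thesis unfolding b a ph2 i2 using ne2 by simp
    qed
  qed
qed

lemma quotient_bij:
  assumes r: "\<And>x y. (x,y) \<in> r \<longleftrightarrow> x \<in> X \<and> y \<in> X \<and> K x = K y"
  shows "bij_betw (\<lambda>k. {y\<in>X. K y = k}) (K ` X) (X // r)"
proof -
  have inj: "inj_on (\<lambda>k. {y\<in>X. K y = k}) (K ` X)"
  proof (rule inj_onI)
    fix k k' assume "k \<in> K ` X" "k' \<in> K ` X" and eq: "{y\<in>X. K y = k} = {y\<in>X. K y = k'}"
    then obtain x where "x \<in> X" "K x = k" by blast
    thus "k = k'" using eq by blast
  qed
  have im: "r``{x} = {y\<in>X. K y = K x}" if "x \<in> X" for x using r that by (auto simp: Image_def)
  have "X // r = (\<lambda>x. r``{x}) ` X" by (auto simp: quotient_def)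
  also have "\<dots> = (\<lambda>x. {y\<in>X. K y = K x}) ` X" using im by auto
  also have "\<dots> = (\<lambda>k. {y\<in>X. K y = k}) ` (K ` X)" by (simp add: image_image)
  finally have "X // r = (\<lambda>k. {y\<in>X. K y = k}) ` (K ` X)" .
  thus ?thesis using inj unfolding bij_betw_def by simp
qed

lemma ex_cong2:
  assumes "\<And>w B. P B \<Longrightarrow> F w B = G w B"
  shows "(\<exists>w B. P B \<and> X = F w B) \<longleftrightarrow> (\<exists>w B. P B \<and> X = G w B)"
  using assms by metis

lemma md2_plus2: "md2 (a + (b + b)) = md2 a"
  unfolding md2_def vec_eq_iff by simp

lemma md2_neg: "md2 (- a) = md2 a"
  unfolding md2_def vec_eq_iff by (auto; presburger)

lemma main_result:
  fixes d :: "real^'n::finite" and D :: "real^'n^'n"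
  assumes inv: "invertible D"
    and d: "\<forall>i. 2 * d $ i \<in> \<int>"
    and DI: "\<forall>i j. D $ i $ j \<in> \<int>"
  shows "reidemeister (xi (d, D)) =
     ereal (1/2) * (\<Sum>A\<in>{mat 1, - mat 1}. abs_inf (det (mat 1 - A ** D)))
     + ereal (real (O_count (\<chi> i j. \<lfloor>(mat 1 - D) $ i $ j\<rfloor>) (\<chi> i. \<lfloor>2 * d $ i\<rfloor>)))"
proof -
  define Di where "Di = (\<chi> i j. \<lfloor>D$i$j\<rfloor>)"
  define d2 where "d2 = (\<chi> i. \<lfloor>2 * d $ i\<rfloor>)"
  define M1 where "M1 = mat 1 - Di"
  define M2 where "M2 = mat 1 + Di"
  have DD: "D = ofm Di" unfolding Di_def ofm_def vec_eq_iff using DI by simp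
  have dd: "d + d = ofv d2" unfolding d2_def ofv_def vec_eq_iff using d by simp
  have B1: "(\<chi> i j. \<lfloor>(mat 1 - D) $ i $ j\<rfloor>) = M1"
    unfolding M1_def DD ofm_1m[symmetric] by (simp add: ofm_def vec_eq_iff)
  have det1: "det (mat 1 - mat 1 ** D) = of_int (det M1)"
    unfolding M1_def DD by (simp add: ofm_1m[symmetric] det_ofm)
  have det2: "det (mat 1 - (- mat 1) ** D) = of_int (det M2)"
    unfolding M2_def DD by (simp add: neg_mm1 ofm_1p[symmetric] det_ofm)
  have Oeq: "O_count M2 (- d2) = O_count M1 d2"
  proof -
    have "md2 (M2 *v x) = md2 (M1 *v x)" for x
    proof -
      have h: "M2 *v x = M1 *v x + (Di *v x + Di *v x)"
        unfolding M1_def M2_def by (simp add: matrix_vector_mult_add_rdistrib matrix_vector_mult_diff_rdistrib)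
      show ?thesis unfolding h by (rule md2_plus2)
    qed
    thus ?thesis unfolding O_count_alt md2_neg by simp
  qed
  obtain \<kappa>1 :: "int^'n \<Rightarrow> (int^'n) set" where k1: "\<forall>z z'. Erel M1 d2 z z' \<longleftrightarrow> \<kappa>1 z = \<kappa>1 z'"
     "det M1 = 0 \<longrightarrow> infinite (range \<kappa>1)"
     "det M1 \<noteq> 0 \<longrightarrow> finite (range \<kappa>1) \<and> 2 * card (range \<kappa>1) = nat \<bar>det M1\<bar> + O_count M1 d2"
    using classes_count[of M1 d2] by blast
  obtain \<kappa>2 :: "int^'n \<Rightarrow> (int^'n) set" where k2: "\<forall>z z'. Erel M2 (- d2) z z' \<longleftrightarrow> \<kappa>2 z = \<kappa>2 z'"
     "det M2 = 0 \<longrightarrow> infinite (range \<kappa>2)"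
     "det M2 \<noteq> 0 \<longrightarrow> finite (range \<kappa>2) \<and> 2 * card (range \<kappa>2) = nat \<bar>det M2\<bar> + O_count M1 d2"
    using classes_count[of M2 "- d2"] Oeq by auto
  define K where "K g = (snd g = mat 1, if snd g = mat 1 then \<kappa>1 (toint (fst g)) else \<kappa>2 (toint (fst g)))"
    for g :: "'n aff"
  have ne: "(- mat 1 :: real^'n^'n) \<noteq> mat 1" using mat1_neq by metis
  have rel: "(g, g') \<in> twisted_rel (xi (d, D)) \<longleftrightarrow> g \<in> Gamma \<and> g' \<in> Gamma \<and> K g = K g'" for g g'
  proof (cases "g \<in> Gamma \<and> g' \<in> Gamma")
    case False thus ?thesis unfolding twisted_rel_def by auto
  next
    case True
    then obtain z A z' A' where g: "g = (ofv z, A)" "A = mat 1 \<or> A = - mat 1"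
      and g': "g' = (ofv z', A')" "A' = mat 1 \<or> A' = - mat 1"
      unfolding Gamma_eq Gset_def by blast
    define Ma where "Ma = (if A' = mat 1 then M1 else M2)"
    define ca where "ca = (if A' = mat 1 then d2 else - d2)"
    have "(\<exists>h\<in>Gamma. g = aff_mult (aff_mult h g') (aff_inv (xi (d, D) h))) \<longleftrightarrow>
       (\<exists>w B. (B = mat 1 \<or> B = - mat 1) \<and> g = aff_mult (aff_mult (ofv w, B) g') (aff_inv (xi (d, D) (ofv w, B))))"
      unfolding Gamma_eq Gset_def by blast
    also have "\<dots> \<longleftrightarrow> (\<exists>w (B::real^'n^'n). (B = mat 1 \<or> B = - mat 1) \<and> (ofv z, A) =
       (ofv (if B = mat 1 then z' + Ma *v w else - z' - ca + Ma *v w), A'))"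
    proof -
      have ca: "aff_mult (aff_mult (ofv w, B) g') (aff_inv (xi (d, D) (ofv w, B))) =
         (ofv (if B = mat 1 then z' + Ma *v w else - z' - ca + Ma *v w), A')"
        if "B = mat 1 \<or> B = - mat 1" for w B
        unfolding g' Ma_def ca_def M1_def M2_def by (rule conj_all[OF inv DD dd that g'(2)])
      show ?thesis unfolding g(1) 
        apply (rule ex_cong1, rule ex_cong1, rule conj_cong[OF refl])
        subgoal for w B using ca[of B w] by simp
        done
    qed
    also have "\<dots> \<longleftrightarrow> A = A' \<and> Erel Ma ca z z'"
      unfolding Erel_def ofv_inj prod.inject using ne by (metis (no_types, lifting))
    also have "\<dots> \<longleftrightarrow> K g = K g'"
      unfolding K_def g(1) g'(1) Ma_def ca_def using k1(1) k2(1) g(2) g'(2) ne by auto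
    finally show ?thesis unfolding twisted_rel_def using True by auto
  qed
  have qb: "bij_betw (\<lambda>k. {y\<in>Gamma. K y = k}) (K ` Gamma) (Gamma // twisted_rel (xi (d, D)))"
    by (rule quotient_bij) (rule rel)
  have KG: "K ` Gamma = ({True} \<times> range \<kappa>1) \<union> ({False} \<times> range \<kappa>2)"
  proof
    show "K ` Gamma \<subseteq> ({True} \<times> range \<kappa>1) \<union> ({False} \<times> range \<kappa>2)"
      unfolding K_def by auto
    show "({True} \<times> range \<kappa>1) \<union> ({False} \<times> range \<kappa>2) \<subseteq> K ` Gamma"
    proof
      fix k assume "k \<in> ({True} \<times> range \<kappa>1) \<union> ({False} \<times> range \<kappa>2)"
      then obtain z where "k = (True, \<kappa>1 z) \<or> k = (False, \<kappa>2 z)" by blast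
      moreover have "(ofv z, mat 1) \<in> Gamma" "(ofv z, - mat 1) \<in> Gamma" unfolding Gamma_eq Gset_def by blast+
      moreover have "K (ofv z, mat 1) = (True, \<kappa>1 z)" "K (ofv z, - mat 1) = (False, \<kappa>2 z)"
        unfolding K_def using ne by simp_all
      ultimately show "k \<in> K ` Gamma" by (metis image_eqI)
    qed
  qed
  have fin_iff: "finite (Gamma // twisted_rel (xi (d, D))) \<longleftrightarrow> finite (range \<kappa>1) \<and> finite (range \<kappa>2)"
    using bij_betw_finite[OF qb] unfolding KG by (auto dest: finite_cartesian_productD2)
  have card_eq: "card (Gamma // twisted_rel (xi (d, D))) = card (range \<kappa>1) + card (range \<kappa>2)"
    if "finite (range \<kappa>1)" "finite (range \<kappa>2)"
  proof -
    have "card (Gamma // twisted_rel (xi (d, D))) = card (K ` Gamma)" using bij_betw_same_card[OF qb] by simp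
    also have "\<dots> = card ({True} \<times> range \<kappa>1) + card ({False} \<times> range \<kappa>2)"
      unfolding KG by (rule card_Un_disjoint) (use that in auto)
    also have "\<dots> = card (range \<kappa>1) + card (range \<kappa>2)" by (simp add: card_cartesian_product)
    finally show ?thesis .
  qed
  have sumA: "(\<Sum>A\<in>{mat 1, - mat 1}. abs_inf (det (mat 1 - A ** D))) =
      abs_inf (of_int (det M1)) + abs_inf (of_int (det M2))"
  proof -
    have det1': "det (mat 1 - D) = of_int (det M1)" using det1 by simp
    show ?thesis using ne by (simp add: det1' det2)
  qed
  show ?thesis
  proof (cases "det M1 = 0 \<or> det M2 = 0")
    case True
    hence "infinite (Gamma // twisted_rel (xi (d, D)))" using fin_iff k1(2) k2(2) by auto
    hence L: "reidemeister (xi (d, D)) = \<infinity>" unfolding reidemeister_def by simp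
    have "abs_inf (of_int (det M1)) + abs_inf (of_int (det M2)) = \<infinity>"
      using True unfolding abs_inf_def by auto
    thus ?thesis unfolding L sumA by simp
  next
    case False
    hence f1: "finite (range \<kappa>1)" "2 * card (range \<kappa>1) = nat \<bar>det M1\<bar> + O_count M1 d2"
      and f2: "finite (range \<kappa>2)" "2 * card (range \<kappa>2) = nat \<bar>det M2\<bar> + O_count M1 d2"
      using k1(3) k2(3) by auto
    have "reidemeister (xi (d, D)) = ereal (real (card (range \<kappa>1) + card (range \<kappa>2)))"
      unfolding reidemeister_def using fin_iff card_eq f1(1) f2(1) by simp
    moreover have "real (card (range \<kappa>1) + card (range \<kappa>2)) =
        1/2 * (\<bar>real_of_int (det M1)\<bar> + \<bar>real_of_int (det M2)\<bar>) + real (O_count M1 d2)"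
    proof -
      have "real (2 * card (range \<kappa>1)) = real (nat \<bar>det M1\<bar> + O_count M1 d2)" using f1(2) by simp
      hence a: "2 * real (card (range \<kappa>1)) = \<bar>real_of_int (det M1)\<bar> + real (O_count M1 d2)" by simp
      have "real (2 * card (range \<kappa>2)) = real (nat \<bar>det M2\<bar> + O_count M1 d2)" using f2(2) by simp
      hence b: "2 * real (card (range \<kappa>2)) = \<bar>real_of_int (det M2)\<bar> + real (O_count M1 d2)" by simp
      show ?thesis using a b by (simp add: field_simps)
    qed
    moreover have "abs_inf (of_int (det M1)) + abs_inf (of_int (det M2)) =
        ereal (\<bar>real_of_int (det M1)\<bar> + \<bar>real_of_int (det M2)\<bar>)"
      using False unfolding abs_inf_def by simp
    ultimately show ?thesis unfolding sumA B1 d2_def[symmetric] by simp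
  qed
qed

theorem proposition5p11:
  fixes d :: "real^'n::finite" and D :: "real^'n^'n"
  assumes "CARD('n) \<ge> 2"
    and "invertible D"
    and "bij_betw (xi (d, D)) Gamma Gamma"
    and "\<forall>i. 2 * d $ i \<in> \<int>"
    and "\<forall>i j. D $ i $ j \<in> \<int>" and "\<forall>i j. matrix_inv D $ i $ j \<in> \<int>"
  shows "reidemeister (xi (d, D)) =
     ereal (1/2) * (\<Sum>A\<in>{mat 1, - mat 1}. abs_inf (det (mat 1 - A ** D)))
     + ereal (real (O_count (\<chi> i j. \<lfloor>(mat 1 - D) $ i $ j\<rfloor>) (\<chi> i. \<lfloor>2 * d $ i\<rfloor>)))"
  by (rule main_result) (use assms in auto)

end
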